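(* Let $n\ge 2$, $a,b,c\in\mathbb{Z}_n$, and suppose $(\mathbb{Z}_n,* )$ with $x*y=ax+by+c$ is a quasigroup. Then, for $1\le k<n$, $(\mathbb{Z}_n,* )$ is $k$-translatable with respect to the ordering $0,1,\dots,n-1$ if and only if $a+kb\equiv 0\pmod n$.
   Context: A finite groupoid with ordering $q_1,\dots,q_n$ is $k$-translatable ($1\le k<n$) with respect to this ordering if $q_i* q_j=q_{i-1}* q_{j-k}$ for all $i\in\{2,\dots,n\}$, $j\in\{1,\dots,n\}$, indices taken modulo $n$ in $\{1,\dots,n\}$ (each Cayley-table row is the previous row with its last $k$ entries moved to the front). *)

theory Defs
  imports "HOL-Number_Theory.Cong"
begin

definition quasigroup :: "'a set \<Rightarrow> ('a \<Rightarrow> 'a \<Rightarrow> 'a) \<Rightarrow> bool" where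
  "quasigroup S f \<longleftrightarrow> (\<forall>x\<in>S. \<forall>y\<in>S. f x y \<in> S) \<and>
     (\<forall>u\<in>S. \<forall>v\<in>S. (\<exists>!x. x \<in> S \<and> f u x = v) \<and> (\<exists>!y. y \<in> S \<and> f y u = v))"

definition idx :: "int \<Rightarrow> int \<Rightarrow> int" where
  "idx n i = (i - 1) mod n + 1"

definition k_translatable :: "int \<Rightarrow> ('a \<Rightarrow> 'a \<Rightarrow> 'a) \<Rightarrow> (int \<Rightarrow> 'a) \<Rightarrow> int \<Rightarrow> bool" where
  "k_translatable n f q k \<longleftrightarrow>
     (\<forall>i\<in>{2..n}. \<forall>j\<in>{1..n}. f (q i) (q j) = f (q (idx n (i - 1))) (q (idx n (j - k))))"

end

theory Submission
  imports Defs
begin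

lemma key:
  fixes n a b c k i j :: int
  assumes "n > 0"
  shows "((a * (i - 1) + b * (j - 1) + c) mod n =
          (a * (i - 2) + b * ((j - k - 1) mod n) + c) mod n) \<longleftrightarrow> [a + k * b = 0] (mod n)"
proof -
  define Z where "Z = a * (i - 2) + b * (j - k - 1) + c"
  have e1: "a * (i - 1) + b * (j - 1) + c = Z + (a + k * b)"
    unfolding Z_def by (simp add: algebra_simps)
  have e2: "(a * (i - 2) + b * ((j - k - 1) mod n) + c) mod n = Z mod n"
  proof -
    have "[(j - k - 1) mod n = j - k - 1] (mod n)" by (simp add: cong_def)
    hence "[a * (i - 2) + b * ((j - k - 1) mod n) + c = Z] (mod n)"
      unfolding Z_def by (intro cong_add cong_mult cong_refl)
    thus ?thesis by (simp only: cong_def)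
  qed
  have "((Z + (a + k * b)) mod n = Z mod n) \<longleftrightarrow> [Z + (a + k * b) = Z + 0] (mod n)"
    by (simp add: cong_def)
  also have "\<dots> \<longleftrightarrow> [a + k * b = 0] (mod n)"
    by (rule cong_add_lcancel)
  finally show ?thesis using e1 e2 by simp
qed

theorem lemma9p1:
  fixes n a b c k :: int
  assumes "n \<ge> 2"
    and "a \<in> {0..<n}" and "b \<in> {0..<n}" and "c \<in> {0..<n}"
    and "quasigroup {0..<n} (\<lambda>x y. (a * x + b * y + c) mod n)"
    and "1 \<le> k" and "k < n"
  shows "k_translatable n (\<lambda>x y. (a * x + b * y + c) mod n) (\<lambda>i. i - 1) k
         \<longleftrightarrow> [a + k * b = 0] (mod n)"
proof -
  have n0: "n > 0" using assms(1) by simp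
  have idx1: "idx n (i - 1) = i - 1" if "i \<in> {2..n}" for i
    using that unfolding idx_def by simp
  have eq: "((a * (i - 1) + b * (j - 1) + c) mod n =
       (a * (idx n (i - 1) - 1) + b * (idx n (j - k) - 1) + c) mod n) \<longleftrightarrow> [a + k * b = 0] (mod n)"
    if "i \<in> {2..n}" for i j
  proof -
    have "idx n (j - k) - 1 = (j - k - 1) mod n" by (simp add: idx_def)
    moreover have "idx n (i - 1) - 1 = i - 2" using idx1[OF that] by simp
    ultimately show ?thesis using key[OF n0, of a i b j c k] by (simp only:)
  qed
  show ?thesis
  proof
    assume "k_translatable n (\<lambda>x y. (a * x + b * y + c) mod n) (\<lambda>i. i - 1) k"
    hence T: "\<forall>i\<in>{2..n}. \<forall>j\<in>{1..n}. (a * (i - 1) + b * (j - 1) + c) mod n =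
       (a * (idx n (i - 1) - 1) + b * (idx n (j - k) - 1) + c) mod n"
      unfolding k_translatable_def .
    have i2: "(2::int) \<in> {2..n}" using assms(1) by simp
    have j1: "(1::int) \<in> {1..n}" using assms(1) by simp
    from bspec[OF bspec[OF T i2] j1] show "[a + k * b = 0] (mod n)" using eq[OF i2, of 1] by (simp only:)
  next
    assume "[a + k * b = 0] (mod n)"
    thus "k_translatable n (\<lambda>x y. (a * x + b * y + c) mod n) (\<lambda>i. i - 1) k"
      unfolding k_translatable_def using eq by blast
  qed
qed

end
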